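(* Let $\mathfrak{H}$ be a Euclidean space and let $(\mathcal{X},\mathsf{S},\gamma,(\Lambda_{a})_{a\in\mathcal{A}})$ be a spectral decomposition system for $\mathfrak{H}$ such that the set $\{\Lambda_a\}_{a\in\mathcal{A}}$ is closed in $\mathscr{L}(\mathcal{X},\mathfrak{H})$. Let $D$ be a nonempty $\mathsf{S}$-invariant subset of $\mathcal{X}$ and let $X\in\mathfrak{H}$. Then \[ \operatorname{cone}\bigl(X-\operatorname{Proj}_{\gamma^{-1}(D)}X\bigr)=\bigl\{\Lambda_a y : y\in\operatorname{cone}\bigl(\gamma(X)-\operatorname{Proj}_D\gamma(X)\bigr)\ \text{and}\ a\in\mathcal{A}_X\bigr\}. \]
   Context: A Euclidean space is a finite-dimensional real Hilbert space; $\mathscr{L}(\mathcal{X},\mathfrak{H})$ carries the operator-norm topology. A spectral decomposition system for a Euclidean space $\mathfrak{H}$ is a tuple $(\mathcal{X},\mathsf{S},\gamma,(\Lambda_a)_{a\in\mathcal{A}})$ where $\mathcal{X}$ is a Euclidean space, $\mathsf{S}$ is a group acting on $\mathcal{X}$ such that each map $x\mapsto \mathsf{s}\cdot x$ is a linear isometry, $\gamma\colon\mathfrak{H}\to\mathcal{X}$ is a mapping, and each $\Lambda_a\colon\mathcal{X}\to\mathfrak{H}$ is a linear isometry, such that: [A] there exists a mapping $\tau\colon\mathcal{X}\to\mathcal{X}$ with $\tau(\mathsf{s}\cdot x)=\tau(x)$ for all $\mathsf{s},x$, $\tau(x)\in\mathsf{S}\cdot x$ for all $x$, and $\gamma\circ\Lambda_a=\tau$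 for all $a\in\mathcal{A}$; [B] for every $X\in\mathfrak{H}$ there exists $a\in\mathcal{A}$ with $X=\Lambda_a\gamma(X)$; [C] $\langle X,Y\rangle\le\langle\gamma(X),\gamma(Y)\rangle$ for all $X,Y\in\mathfrak{H}$. $\mathcal{A}_X=\{a\in\mathcal{A}:X=\Lambda_a\gamma(X)\}$. A set $D\subset\mathcal{X}$ is $\mathsf{S}$-invariant if $\mathsf{s}\cdot x\in D$ for all $x\in D$, $\mathsf{s}\in\mathsf{S}$. For a nonempty subset $C$ of a Euclidean space $\mathcal{H}$ and $x\in\mathcal{H}$, $\operatorname{Proj}_C x=\{y\in C:\|x-y\|=\inf_{z\in C}\|x-z\|\}$ (possibly empty). For a set $E$, $\operatorname{cone}E=\bigcup_{\alpha>0}\alpha E$, and $x-E=\{x-e:e\in E\}$. *)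

theory Defs
  imports "HOL-Analysis.Analysis" "HOL-Algebra.Group_Action"
begin

definition lin_isometry :: "('a::real_normed_vector \<Rightarrow> 'b::real_normed_vector) \<Rightarrow> bool" where
  "lin_isometry f \<longleftrightarrow> linear f \<and> (\<forall>x. norm (f x) = norm x)"

text \<open>Spectral decomposition system for the Euclidean space 'h.
  The group S is an abstract group G (HOL-Algebra) acting on 'x via phi.\<close>
definition spectral_decomposition_system ::
  "('g, 'c) monoid_scheme \<Rightarrow> ('g \<Rightarrow> 'x::euclidean_space \<Rightarrow> 'x) \<Rightarrow> ('h::euclidean_space \<Rightarrow> 'x)
   \<Rightarrow> 'a set \<Rightarrow> ('a \<Rightarrow> 'x \<Rightarrow> 'h) \<Rightarrow> bool" where
  "spectral_decomposition_system G \<phi> \<gamma> A \<Lambda> \<longleftrightarrow>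
     group_action G UNIV \<phi> \<and>
     (\<forall>s\<in>carrier G. lin_isometry (\<phi> s)) \<and>
     (\<forall>a\<in>A. lin_isometry (\<Lambda> a)) \<and>
     (\<exists>\<tau>::'x \<Rightarrow> 'x.
        (\<forall>s\<in>carrier G. \<forall>x. \<tau> (\<phi> s x) = \<tau> x) \<and>
        (\<forall>x. \<tau> x \<in> {\<phi> s x | s. s \<in> carrier G}) \<and>
        (\<forall>a\<in>A. \<gamma> \<circ> \<Lambda> a = \<tau>)) \<and>
     (\<forall>X. \<exists>a\<in>A. X = \<Lambda> a (\<gamma> X)) \<and>
     (\<forall>X Y. inner X Y \<le> inner (\<gamma> X) (\<gamma> Y))"

definition invariant_set :: "('g, 'c) monoid_scheme \<Rightarrow> ('g \<Rightarrow> 'x \<Rightarrow> 'x) \<Rightarrow> 'x set \<Rightarrow> bool" where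
  "invariant_set G \<phi> D \<longleftrightarrow> (\<forall>x\<in>D. \<forall>s\<in>carrier G. \<phi> s x \<in> D)"

definition adapted_indices :: "'a set \<Rightarrow> ('a \<Rightarrow> 'x \<Rightarrow> 'h) \<Rightarrow> ('h \<Rightarrow> 'x) \<Rightarrow> 'h \<Rightarrow> 'a set" where
  "adapted_indices A \<Lambda> \<gamma> X = {a \<in> A. X = \<Lambda> a (\<gamma> X)}"

text \<open>Set-valued projection (possibly empty).\<close>
definition proj_set :: "'a::real_normed_vector set \<Rightarrow> 'a \<Rightarrow> 'a set" where
  "proj_set C x = {y \<in> C. norm (x - y) = (INF z\<in>C. norm (x - z))}"

text \<open>cone E = union over alpha > 0 of alpha E (named pos_cone to avoid the library predicate cone).\<close>
definition pos_cone :: "'a::real_vector set \<Rightarrow> 'a set" where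
  "pos_cone E = {\<alpha> *\<^sub>R e | \<alpha> e. \<alpha> > 0 \<and> e \<in> E}"

end

theory Submission
  imports Defs
begin

locale sdsl =
  fixes \<gamma> :: "'h::euclidean_space \<Rightarrow> 'x::euclidean_space" and A :: "'a set"
    and \<Lambda> :: "'a \<Rightarrow> 'x \<Rightarrow> 'h" and \<tau> :: "'x \<Rightarrow> 'x"
  assumes iso: "\<And>a. a\<in>A \<Longrightarrow> lin_isometry (\<Lambda> a)"
    and tau: "\<And>a. a\<in>A \<Longrightarrow> \<gamma> \<circ> \<Lambda> a = \<tau>"
    and dec: "\<And>X. \<exists>a\<in>A. X = \<Lambda> a (\<gamma> X)"
    and ineq: "\<And>X Y. inner X Y \<le> inner (\<gamma> X) (\<gamma> Y)"
begin

lemma lin: "a\<in>A \<Longrightarrow> linear (\<Lambda> a)"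
  using iso lin_isometry_def by blast

lemma normp: "a\<in>A \<Longrightarrow> norm (\<Lambda> a x) = norm x"
  using iso lin_isometry_def by blast

lemma innerp: assumes "a\<in>A" shows "inner (\<Lambda> a x) (\<Lambda> a y) = inner x y"
proof -
  have l: "linear (\<Lambda> a)" using lin assms by blast
  have "(norm (\<Lambda> a (x+y)))^2 = (norm (x+y))^2" using normp assms by simp
  hence "inner (\<Lambda> a x + \<Lambda> a y) (\<Lambda> a x + \<Lambda> a y) = inner (x+y) (x+y)"
    using l by (simp add: linear_add power2_norm_eq_inner)
  moreover have "inner (\<Lambda> a x) (\<Lambda> a x) = inner x x"
    using normp[OF assms, of x] by (metis power2_norm_eq_inner)
  moreover have "inner (\<Lambda> a y) (\<Lambda> a y) = inner y y"
    using normp[OF assms, of y] by (metis power2_norm_eq_inner)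
  ultimately show ?thesis by (simp add: inner_add_left inner_add_right inner_commute)
qed

lemma gL: "a\<in>A \<Longrightarrow> \<gamma> (\<Lambda> a x) = \<tau> x"
  using tau by (metis comp_apply)

lemma tg: "\<tau> (\<gamma> Y) = \<gamma> Y"
  using dec[of Y] gL by metis

lemma ng: "norm (\<gamma> X) = norm X"
  using dec[of X] normp by metis

lemma ig: "inner (\<gamma> X) (\<gamma> X) = inner X X"
  using ng[of X] by (metis power2_norm_eq_inner)

lemma dist_ineq: "norm (\<gamma> X - \<gamma> Y) \<le> norm (X - Y)"
proof -
  have "inner (\<gamma> X - \<gamma> Y) (\<gamma> X - \<gamma> Y) \<le> inner (X - Y) (X - Y)"
    using ineq[of X Y] ig[of X] ig[of Y]
    by (simp add: inner_diff_left inner_diff_right inner_commute)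
  hence "(norm (\<gamma> X - \<gamma> Y))^2 \<le> (norm (X - Y))^2"
    by (simp add: power2_norm_eq_inner)
  thus ?thesis using power2_le_imp_le by fastforce
qed

lemma simult:
  assumes h: "inner X Y = inner (\<gamma> X) (\<gamma> Y)"
  shows "\<exists>a\<in>A. X = \<Lambda> a (\<gamma> X) \<and> Y = \<Lambda> a (\<gamma> Y)"
proof -
  obtain a where a: "a\<in>A" and aZ: "X+Y = \<Lambda> a (\<gamma> (X+Y))" using dec by blast
  define g where "g = \<gamma> (X+Y)"
  define s where "s = \<gamma> X + \<gamma> Y"
  have n1: "inner g g = inner (X+Y) (X+Y)" unfolding g_def by (rule ig)
  have n2: "inner s s = inner (X+Y) (X+Y)" unfolding s_def
    using h ig[of X] ig[of Y] by (simp add: inner_add_left inner_add_right inner_commute)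
  have n3: "inner g s \<ge> inner (X+Y) (X+Y)"
  proof -
    have "inner g s = inner g (\<gamma> X) + inner g (\<gamma> Y)" unfolding s_def by (simp add: inner_add_right)
    moreover have "inner (X+Y) X \<le> inner g (\<gamma> X)" unfolding g_def by (rule ineq)
    moreover have "inner (X+Y) Y \<le> inner g (\<gamma> Y)" unfolding g_def by (rule ineq)
    ultimately show ?thesis by (simp add: inner_add_right)
  qed
  have "inner (g - s) (g - s) \<le> 0"
    using n1 n2 n3 by (simp add: inner_diff_left inner_diff_right inner_commute)
  hence "inner (g - s) (g - s) = 0" using inner_ge_zero[of "g - s"] by linarith
  hence gs: "g = s" by simp
  define U where "U = \<Lambda> a (\<gamma> X)"
  define V where "V = \<Lambda> a (\<gamma> Y)"
  have l: "linear (\<Lambda> a)" using lin a by blast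
  have sum: "X + Y = U + V" using aZ gs unfolding g_def s_def U_def V_def
    by (simp add: linear_add[OF l])
  hence e: "X - U = V - Y" by (simp add: algebra_simps)
  have i1: "inner X V \<le> inner (\<gamma> X) (\<gamma> Y)"
    using ineq[of X V] unfolding V_def using gL[OF a] tg by simp
  have i2: "inner U Y \<le> inner (\<gamma> X) (\<gamma> Y)"
    using ineq[of U Y] unfolding U_def using gL[OF a] tg by simp
  have i3: "inner U V = inner (\<gamma> X) (\<gamma> Y)" unfolding U_def V_def using innerp[OF a] by simp
  have "inner (X - U) (X - U) = inner (X - U) (V - Y)" using e by simp
  also have "\<dots> = inner X V - inner X Y - inner U V + inner U Y"
    by (simp add: inner_diff_left inner_diff_right)
  also have "\<dots> \<le> 0" using i1 i2 i3 h by linarith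
  finally have "inner (X - U) (X - U) = 0" using inner_ge_zero[of "X - U"] by linarith
  hence "X = U" by simp
  with e have "Y = V" by simp
  with \<open>X = U\<close> a show ?thesis unfolding U_def V_def by blast
qed

end

theorem proposition3p3:
  fixes G :: "('g, 'c) monoid_scheme" and \<phi> :: "'g \<Rightarrow> 'x::euclidean_space \<Rightarrow> 'x"
    and \<gamma> :: "'h::euclidean_space \<Rightarrow> 'x" and A :: "'a set" and \<Lambda> :: "'a \<Rightarrow> 'x \<Rightarrow> 'h"
    and D :: "'x set" and X :: 'h
  assumes sds: "spectral_decomposition_system G \<phi> \<gamma> A \<Lambda>"
    and closed: "closed ((\<lambda>a. Blinfun (\<Lambda> a)) ` A)"
    and nonempty: "D \<noteq> {}"
    and inv: "invariant_set G \<phi> D"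
  shows "pos_cone ((\<lambda>Y. X - Y) ` proj_set (\<gamma> -` D) X) =
         {\<Lambda> a y | a y. y \<in> pos_cone ((\<lambda>z. \<gamma> X - z) ` proj_set D (\<gamma> X)) \<and> a \<in> adapted_indices A \<Lambda> \<gamma> X}"
proof -
  obtain \<tau> where t1: "\<forall>x. \<tau> x \<in> {\<phi> s x | s. s \<in> carrier G}"
    and t2: "\<forall>a\<in>A. \<gamma> \<circ> \<Lambda> a = \<tau>"
    using sds unfolding spectral_decomposition_system_def by blast
  interpret sdsl \<gamma> A \<Lambda> \<tau>
    apply unfold_locales
    using sds t2 unfolding spectral_decomposition_system_def by auto
  have tD: "\<tau> y \<in> D" if yD: "y \<in> D" for y
  proof -
    obtain s where "s \<in> carrier G" "\<tau> y = \<phi> s y" using t1 by blast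
    thus ?thesis using inv yD unfolding invariant_set_def by auto
  qed
  have inD: "\<And>y a. y\<in>D \<Longrightarrow> a\<in>A \<Longrightarrow> \<gamma> (\<Lambda> a y) \<in> D" using gL tD by simp
  obtain a0 where a0: "a0\<in>A" "X = \<Lambda> a0 (\<gamma> X)" using dec by blast
  define d1 where "d1 = (INF Y\<in>\<gamma> -` D. norm (X - Y))"
  define d2 where "d2 = (INF z\<in>D. norm (\<gamma> X - z))"
  obtain y0 where y0: "y0 \<in> D" using nonempty by blast
  have ne1: "\<gamma> -` D \<noteq> {}" using inD[OF y0 a0(1)] by blast
  have bb1: "bdd_below ((\<lambda>Y. norm (X - Y)) ` (\<gamma> -` D))" by (rule bdd_belowI[of _ 0]) auto
  have bb2: "bdd_below ((\<lambda>z. norm (\<gamma> X - z)) ` D)" by (rule bdd_belowI[of _ 0]) auto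
  have "d2 \<le> d1" unfolding d1_def
  proof (rule cINF_greatest[OF ne1])
    fix Y assume "Y \<in> \<gamma> -` D"
    hence "d2 \<le> norm (\<gamma> X - \<gamma> Y)" unfolding d2_def using cINF_lower[OF bb2] by simp
    thus "d2 \<le> norm (X - Y)" using dist_ineq[of X Y] by linarith
  qed
  moreover have "d1 \<le> d2" unfolding d2_def
  proof (rule cINF_greatest[OF nonempty])
    fix z assume z: "z \<in> D"
    hence "d1 \<le> norm (X - \<Lambda> a0 z)" unfolding d1_def using cINF_lower[OF bb1] inD[OF z a0(1)] by simp
    also have "X - \<Lambda> a0 z = \<Lambda> a0 (\<gamma> X - z)" using a0 lin[OF a0(1)] by (metis linear_diff)
    finally show "d1 \<le> norm (\<gamma> X - z)" using normp[OF a0(1)] by simp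
  qed
  ultimately have dd: "d1 = d2" by simp
  have P1: "\<Lambda> a y \<in> proj_set (\<gamma> -` D) X \<and> X - \<Lambda> a y = \<Lambda> a (\<gamma> X - y)"
    if y: "y \<in> proj_set D (\<gamma> X)" and a: "a \<in> A" "X = \<Lambda> a (\<gamma> X)" for y a
  proof -
    have e: "X - \<Lambda> a y = \<Lambda> a (\<gamma> X - y)" using a lin[OF a(1)] by (metis linear_diff)
    have "y \<in> D" "norm (\<gamma> X - y) = d2" using y unfolding proj_set_def d2_def by auto
    thus ?thesis unfolding proj_set_def d1_def[symmetric] using e dd normp[OF a(1)] inD[OF _ a(1)]
      by simp
  qed
  have P2: "\<exists>a\<in>A. X = \<Lambda> a (\<gamma> X) \<and> X - Y = \<Lambda> a (\<gamma> X - \<gamma> Y) \<and> \<gamma> Y \<in> proj_set D (\<gamma> X)"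
    if Y: "Y \<in> proj_set (\<gamma> -` D) X" for Y
  proof -
    have YD: "\<gamma> Y \<in> D" and nY: "norm (X - Y) = d1" using Y unfolding proj_set_def d1_def by auto
    have "d2 \<le> norm (\<gamma> X - \<gamma> Y)" unfolding d2_def using cINF_lower[OF bb2] YD by simp
    hence eqn: "norm (\<gamma> X - \<gamma> Y) = norm (X - Y)" using dist_ineq[of X Y] nY dd by linarith
    hence "inner (\<gamma> X - \<gamma> Y) (\<gamma> X - \<gamma> Y) = inner (X - Y) (X - Y)"
      by (metis power2_norm_eq_inner)
    hence "inner X Y = inner (\<gamma> X) (\<gamma> Y)" using ig[of X] ig[of Y]
      by (simp add: inner_diff_left inner_diff_right inner_commute)
    then obtain a where a: "a\<in>A" "X = \<Lambda> a (\<gamma> X)" "Y = \<Lambda> a (\<gamma> Y)" using simult by blast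
    have e: "X - Y = \<Lambda> a (\<gamma> X - \<gamma> Y)" using a lin[OF a(1)] by (metis linear_diff)
    have "\<gamma> Y \<in> proj_set D (\<gamma> X)" unfolding proj_set_def d2_def[symmetric]
      using YD eqn nY dd by simp
    thus ?thesis using a e by blast
  qed
  show ?thesis
  proof (intro equalityI subsetI)
    fix W assume "W \<in> pos_cone ((\<lambda>Y. X - Y) ` proj_set (\<gamma> -` D) X)"
    then obtain \<alpha> Y where al: "\<alpha> > 0" and Y: "Y \<in> proj_set (\<gamma> -` D) X" and W: "W = \<alpha> *\<^sub>R (X - Y)"
      unfolding pos_cone_def by blast
    obtain a where a: "a\<in>A" "X = \<Lambda> a (\<gamma> X)" "X - Y = \<Lambda> a (\<gamma> X - \<gamma> Y)"
      and pY: "\<gamma> Y \<in> proj_set D (\<gamma> X)" using P2[OF Y] by blast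
    have "W = \<Lambda> a (\<alpha> *\<^sub>R (\<gamma> X - \<gamma> Y))" using W a lin[OF a(1)] by (simp add: linear_scale)
    moreover have "\<alpha> *\<^sub>R (\<gamma> X - \<gamma> Y) \<in> pos_cone ((\<lambda>z. \<gamma> X - z) ` proj_set D (\<gamma> X))"
      unfolding pos_cone_def using al pY by blast
    moreover have "a \<in> adapted_indices A \<Lambda> \<gamma> X" unfolding adapted_indices_def using a by blast
    ultimately show "W \<in> {\<Lambda> a y | a y. y \<in> pos_cone ((\<lambda>z. \<gamma> X - z) ` proj_set D (\<gamma> X)) \<and> a \<in> adapted_indices A \<Lambda> \<gamma> X}"
      by blast
  next
    fix W assume "W \<in> {\<Lambda> a y | a y. y \<in> pos_cone ((\<lambda>z. \<gamma> X - z) ` proj_set D (\<gamma> X)) \<and> a \<in> adapted_indices A \<Lambda> \<gamma> X}"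
    then obtain a \<alpha> y where W: "W = \<Lambda> a (\<alpha> *\<^sub>R (\<gamma> X - y))" and al: "\<alpha> > 0"
      and y: "y \<in> proj_set D (\<gamma> X)" and a: "a \<in> A" "X = \<Lambda> a (\<gamma> X)"
      unfolding pos_cone_def adapted_indices_def by blast
    have p: "\<Lambda> a y \<in> proj_set (\<gamma> -` D) X" and e: "X - \<Lambda> a y = \<Lambda> a (\<gamma> X - y)"
      using P1[OF y a] by auto
    have "W = \<alpha> *\<^sub>R (X - \<Lambda> a y)" using W e lin[OF a(1)] by (simp add: linear_scale)
    thus "W \<in> pos_cone ((\<lambda>Y. X - Y) ` proj_set (\<gamma> -` D) X)"
      unfolding pos_cone_def using al p by blast
  qed
qed

end
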